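(* Let $M$ be a module over the Laurent polynomial ring $\mathbb{Z}[t^{\pm 1}]$, equipped with the binary operation $a * b = ta + (1-t)b$ (the Alexander quandle structure on $M$). Then $(M,* )$ is a Rump right quasigroup if and only if $(1-t)^{2}m = 0$ for every $m \in M$.
   Context: A magma $(X,\cdot)$ is a right quasigroup if every right translation $y \mapsto yx$ is a bijection of $X$. A Rump right quasigroup (cycle set) is a right quasigroup satisfying the identity $(zx)(yx) = (zy)(xy)$ for all $x,y,z \in X$. *)

theory Defs
  imports Main
begin

text \<open>A module over the Laurent polynomial ring Z[t, t^-1] is the same thing as an
abelian group M together with an additive automorphism t of M (the action of the
variable t); t^-1 acts by the inverse automorphism.\<close>

definition laurent_module :: "('a::ab_group_add \<Rightarrow> 'a) \<Rightarrow> bool" where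
  "laurent_module t \<longleftrightarrow> bij t \<and> (\<forall>a b. t (a + b) = t a + t b)"

definition alex_op :: "('a::ab_group_add \<Rightarrow> 'a) \<Rightarrow> 'a \<Rightarrow> 'a \<Rightarrow> 'a" where
  "alex_op t a b = t a + (b - t b)"

definition right_quasigroup :: "('a \<Rightarrow> 'a \<Rightarrow> 'a) \<Rightarrow> bool" where
  "right_quasigroup op \<longleftrightarrow> (\<forall>x. bij (\<lambda>y. op y x))"

definition rump_right_quasigroup :: "('a \<Rightarrow> 'a \<Rightarrow> 'a) \<Rightarrow> bool" where
  "rump_right_quasigroup op \<longleftrightarrow> right_quasigroup op \<and>
     (\<forall>x y z. op (op z x) (op y x) = op (op z y) (op x y))"

definition one_minus :: "('a::ab_group_add \<Rightarrow> 'a) \<Rightarrow> 'a \<Rightarrow> 'a" where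
  "one_minus t m = m - t m"

end

theory Submission
  imports Defs
begin

lemma add_diff_t:
  fixes t :: "'a::ab_group_add \<Rightarrow> 'a"
  assumes "\<forall>a b. t (a + b) = t a + t b"
  shows "t (a - b) = t a - t b"
proof -
  have "t (a - b + b) = t (a - b) + t b" using assms by blast
  then show ?thesis by (simp add: algebra_simps)
qed

lemma key:
  fixes t :: "'a::ab_group_add \<Rightarrow> 'a"
  assumes h: "\<forall>a b. t (a + b) = t a + t b"
  shows "alex_op t (alex_op t z x) (alex_op t y x) - alex_op t (alex_op t z y) (alex_op t x y)
     = one_minus t (one_minus t (x - y))"
  using h by (simp add: alex_op_def one_minus_def add_diff_t[OF h] algebra_simps)

lemma rq:
  fixes t :: "'a::ab_group_add \<Rightarrow> 'a"
  assumes "bij t"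
  shows "bij (\<lambda>y. t y + c)"
proof -
  have "(\<lambda>y. t y + c) = (\<lambda>u. u + c) \<circ> t" by auto
  moreover have "bij (\<lambda>u::'a. u + c)"
    by (rule bijI) (auto simp: inj_def surj_def intro!: exI[where x="_ - c"])
  ultimately show ?thesis using assms bij_comp by metis
qed

theorem mainTheorem1:
  fixes t :: "'a::ab_group_add \<Rightarrow> 'a"
  assumes "laurent_module t"
  shows "rump_right_quasigroup (alex_op t) \<longleftrightarrow>
         (\<forall>m. one_minus t (one_minus t m) = 0)"
proof -
  have b: "bij t" and h: "\<forall>a b. t (a + b) = t a + t b"
    using assms unfolding laurent_module_def by auto
  have R: "right_quasigroup (alex_op t)"
    unfolding right_quasigroup_def alex_op_def using rq[OF b] by blast
  show ?thesis
  proof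
    assume "rump_right_quasigroup (alex_op t)"
    then have E: "\<And>x y z. alex_op t (alex_op t z x) (alex_op t y x) = alex_op t (alex_op t z y) (alex_op t x y)"
      unfolding rump_right_quasigroup_def by blast
    show "\<forall>m. one_minus t (one_minus t m) = 0"
    proof
      fix m
      have K: "alex_op t (alex_op t 0 m) (alex_op t 0 m) - alex_op t (alex_op t 0 0) (alex_op t m 0)
          = one_minus t (one_minus t (m - 0))" by (rule key[OF h])
      have "alex_op t (alex_op t 0 m) (alex_op t 0 m) = alex_op t (alex_op t 0 0) (alex_op t m 0)"
        by (rule E)
      then have "one_minus t (one_minus t (m - 0)) = 0" using K by simp
      then show "one_minus t (one_minus t m) = 0" by simp
    qed
  next
    assume A: "\<forall>m. one_minus t (one_minus t m) = 0"
    have "\<And>x y z. alex_op t (alex_op t z x) (alex_op t y x) = alex_op t (alex_op t z y) (alex_op t x y)"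
      using key[OF h] A by (metis eq_iff_diff_eq_0)
    then show "rump_right_quasigroup (alex_op t)"
      unfolding rump_right_quasigroup_def using R by blast
  qed
qed

end
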